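(* Let $(X,\mathcal{E})$ be an unbounded discrete ballean such that any two distinct ultrafilters from $X^\sharp$ are incomparable. Then $(X,\mathcal{E})$ is relatively maximal, i.e. there is no coarse structure $\mathcal{E}'$ on $X$ with $\mathcal{E}\subsetneq\mathcal{E}'$ having the same bounded sets as $\mathcal{E}$.
   Context: A ballean $(X,\mathcal{E})$ is a set with a coarse structure. $E[x]=\{y:(x,y)\in E\}$. $Y$ is bounded if $Y\subseteq E[x]$ for some $x$ and $E\in\mathcal{E}$. The ballean is discrete if for every $E\in\mathcal{E}$ there is a bounded $B$ with $E[x]=\{x\}$ for all $x\in X\setminus B$. With $X$ discrete, $\beta X$ is the set of ultrafilters on $X$ and $X^\sharp$ is the set of ultrafilters all of whose members are unbounded. For $f:X\to X$, $f^\beta:\beta X\to\beta X$ is its extension, $f^\beta(p)$ being the ultrafilter generated by $\{f(P):P\in p\}$. Ultrafilters $p,q$ are incomparable if $f^\beta(p)\neq q$ and $f^\beta(q)\neq p$ for every $f:X\to X$. A ballean is relatively maximal if $\mathcal{E}$ is the largest coarse structure on $X$ whose bounded sets are exactly the bounded sets of $(X,\mathcal{E})$. *)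

theory Defs
  imports Main
begin

definition coarse_structure :: "'a set \<Rightarrow> ('a \<times> 'a) set set \<Rightarrow> bool" where
  "coarse_structure X \<E> \<longleftrightarrow>
     (\<forall>E\<in>\<E>. E \<subseteq> X \<times> X) \<and>
     Id_on X \<in> \<E> \<and>
     (\<forall>E\<in>\<E>. Id_on X \<subseteq> E) \<and>
     (\<forall>E\<in>\<E>. \<forall>E'\<in>\<E>. E O E' \<in> \<E>) \<and>
     (\<forall>E\<in>\<E>. E\<inverse> \<in> \<E>) \<and>
     (\<forall>E\<in>\<E>. \<forall>E'. Id_on X \<subseteq> E' \<and> E' \<subseteq> E \<longrightarrow> E' \<in> \<E>) \<and>
     (\<forall>x\<in>X. \<forall>y\<in>X. \<exists>E\<in>\<E>. (x, y) \<in> E)"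

definition ball_at :: "('a \<times> 'a) set \<Rightarrow> 'a \<Rightarrow> 'a set" where
  "ball_at E x = {y. (x, y) \<in> E}"

definition bounded_in :: "'a set \<Rightarrow> ('a \<times> 'a) set set \<Rightarrow> 'a set \<Rightarrow> bool" where
  "bounded_in X \<E> Y \<longleftrightarrow> (\<exists>x\<in>X. \<exists>E\<in>\<E>. Y \<subseteq> ball_at E x)"

definition discrete_ballean :: "'a set \<Rightarrow> ('a \<times> 'a) set set \<Rightarrow> bool" where
  "discrete_ballean X \<E> \<longleftrightarrow>
     (\<forall>E\<in>\<E>. \<exists>B. B \<subseteq> X \<and> bounded_in X \<E> B \<and> (\<forall>x\<in>X - B. ball_at E x = {x}))"

definition ultrafilter_on :: "'a set \<Rightarrow> 'a set set \<Rightarrow> bool" where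
  "ultrafilter_on X p \<longleftrightarrow>
     (\<forall>A\<in>p. A \<subseteq> X) \<and> X \<in> p \<and> {} \<notin> p \<and>
     (\<forall>A\<in>p. \<forall>B\<in>p. A \<inter> B \<in> p) \<and>
     (\<forall>A\<in>p. \<forall>B. A \<subseteq> B \<and> B \<subseteq> X \<longrightarrow> B \<in> p) \<and>
     (\<forall>A. A \<subseteq> X \<longrightarrow> A \<in> p \<or> X - A \<in> p)"

definition sharp_ultrafilters :: "'a set \<Rightarrow> ('a \<times> 'a) set set \<Rightarrow> 'a set set set" where
  "sharp_ultrafilters X \<E> =
     {p. ultrafilter_on X p \<and> (\<forall>P\<in>p. \<not> bounded_in X \<E> P)}"

definition beta_ext :: "'a set \<Rightarrow> ('a \<Rightarrow> 'a) \<Rightarrow> 'a set set \<Rightarrow> 'a set set" where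
  "beta_ext X f p = {A. A \<subseteq> X \<and> (\<exists>P\<in>p. f ` P \<subseteq> A)}"

definition incomparable :: "'a set \<Rightarrow> 'a set set \<Rightarrow> 'a set set \<Rightarrow> bool" where
  "incomparable X p q \<longleftrightarrow>
     (\<forall>f. f ` X \<subseteq> X \<longrightarrow> beta_ext X f p \<noteq> q \<and> beta_ext X f q \<noteq> p)"

definition relatively_maximal :: "'a set \<Rightarrow> ('a \<times> 'a) set set \<Rightarrow> bool" where
  "relatively_maximal X \<E> \<longleftrightarrow>
     (\<forall>\<E>'. coarse_structure X \<E>' \<and> (\<forall>Y. Y \<subseteq> X \<longrightarrow> (bounded_in X \<E>' Y \<longleftrightarrow> bounded_in X \<E> Y))
        \<longrightarrow> \<E>' \<subseteq> \<E>)"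

end

theory Submission
  imports Defs
begin

lemma cs_sub: "coarse_structure X \<E> \<Longrightarrow> F \<in> \<E> \<Longrightarrow> F \<subseteq> X \<times> X"
  unfolding coarse_structure_def by (elim conjE) blast
lemma cs_idin: "coarse_structure X \<E> \<Longrightarrow> Id_on X \<in> \<E>"
  unfolding coarse_structure_def by (elim conjE) blast
lemma cs_id: "coarse_structure X \<E> \<Longrightarrow> F \<in> \<E> \<Longrightarrow> Id_on X \<subseteq> F"
  unfolding coarse_structure_def by (elim conjE) blast
lemma cs_comp: "coarse_structure X \<E> \<Longrightarrow> F \<in> \<E> \<Longrightarrow> F' \<in> \<E> \<Longrightarrow> F O F' \<in> \<E>"
  unfolding coarse_structure_def by (elim conjE) blast
lemma cs_conv: "coarse_structure X \<E> \<Longrightarrow> F \<in> \<E> \<Longrightarrow> F\<inverse> \<in> \<E>"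
  unfolding coarse_structure_def by (elim conjE) blast
lemma cs_mono: assumes "coarse_structure X \<E>" "F \<in> \<E>" "Id_on X \<subseteq> F'" "F' \<subseteq> F" shows "F' \<in> \<E>"
proof -
  have h: "\<forall>E\<in>\<E>. \<forall>E'. Id_on X \<subseteq> E' \<and> E' \<subseteq> E \<longrightarrow> E' \<in> \<E>"
    using assms(1) unfolding coarse_structure_def by (elim conjE) assumption
  show ?thesis using h[rule_format, OF assms(2)] assms(3,4) by blast
qed
lemma cs_conn: assumes "coarse_structure X \<E>" "x \<in> X" "y \<in> X" shows "\<exists>F\<in>\<E>. (x,y) \<in> F"
proof -
  have h: "\<forall>x\<in>X. \<forall>y\<in>X. \<exists>E\<in>\<E>. (x, y) \<in> E"
    using assms(1) unfolding coarse_structure_def by (elim conjE) assumption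
  show ?thesis using h assms(2,3) by blast
qed

lemma cs_un:
  assumes cs: "coarse_structure X \<E>" and F: "F \<in> \<E>" and G: "G \<in> \<E>"
  shows "F \<union> G \<in> \<E>"
proof (rule cs_mono[OF cs cs_comp[OF cs F G]])
  show "Id_on X \<subseteq> F \<union> G" using cs_id[OF cs F] by blast
  have s1: "F \<subseteq> X \<times> X" "G \<subseteq> X \<times> X" using cs_sub[OF cs] F G by auto
  have i1: "Id_on X \<subseteq> F" "Id_on X \<subseteq> G" using cs_id[OF cs] F G by auto
  show "F \<union> G \<subseteq> F O G"
  proof
    fix z assume "z \<in> F \<union> G"
    then obtain a b where z: "z = (a,b)" and ab: "(a,b) \<in> F \<or> (a,b) \<in> G" by (cases z) auto
    from ab show "z \<in> F O G"
    proof
      assume h: "(a,b) \<in> F"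
      then have "(b,b) \<in> G" using s1 i1 by auto
      then show ?thesis using h z by blast
    next
      assume h: "(a,b) \<in> G"
      then have "(a,a) \<in> F" using s1 i1 by auto
      then show ?thesis using h z by blast
    qed
  qed
qed

lemma bdd_mono: "bounded_in X \<E> A \<Longrightarrow> B \<subseteq> A \<Longrightarrow> bounded_in X \<E> B"
  unfolding bounded_in_def by blast

lemma bdd_un:
  assumes cs: "coarse_structure X \<E>" and A: "bounded_in X \<E> A" and B: "bounded_in X \<E> B"
  shows "bounded_in X \<E> (A \<union> B)"
proof -
  obtain x1 E1 where x1: "x1 \<in> X" "E1 \<in> \<E>" "A \<subseteq> ball_at E1 x1" using A unfolding bounded_in_def by blast
  obtain x2 E2 where x2: "x2 \<in> X" "E2 \<in> \<E>" "B \<subseteq> ball_at E2 x2" using B unfolding bounded_in_def by blast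
  obtain E3 where E3: "E3 \<in> \<E>" "(x1,x2) \<in> E3" using cs_conn[OF cs x1(1) x2(1)] by blast
  have "E1 \<union> (E3 O E2) \<in> \<E>" using cs_un[OF cs x1(2) cs_comp[OF cs E3(1) x2(2)]] .
  moreover have "A \<union> B \<subseteq> ball_at (E1 \<union> (E3 O E2)) x1"
  proof
    fix y assume "y \<in> A \<union> B"
    then show "y \<in> ball_at (E1 \<union> (E3 O E2)) x1"
    proof
      assume "y \<in> A" then show ?thesis using x1(3) unfolding ball_at_def by auto
    next
      assume "y \<in> B" then have "(x2,y) \<in> E2" using x2(3) unfolding ball_at_def by auto
      then have "(x1,y) \<in> E3 O E2" using E3(2) by blast
      then show ?thesis unfolding ball_at_def by auto
    qed
  qed
  ultimately show ?thesis using x1(1) unfolding bounded_in_def by blast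
qed

lemma uf_union:
  assumes u: "ultrafilter_on X p" and AB: "A \<union> B \<in> p" "A \<subseteq> X" "B \<subseteq> X"
  shows "A \<in> p \<or> B \<in> p"
proof (rule ccontr)
  assume n: "\<not> ?thesis"
  have c: "\<forall>A. A \<subseteq> X \<longrightarrow> A \<in> p \<or> X - A \<in> p" and i: "\<forall>A\<in>p. \<forall>B\<in>p. A \<inter> B \<in> p"
    and e: "{} \<notin> p" using u unfolding ultrafilter_on_def by blast+
  have "X - A \<in> p" "X - B \<in> p" using c AB n by blast+
  then have "(A \<union> B) \<inter> ((X - A) \<inter> (X - B)) \<in> p" using i AB by blast
  moreover have "(A \<union> B) \<inter> ((X - A) \<inter> (X - B)) = {}" by blast
  ultimately show False using e by simp
qed


definition isF :: "'a set \<Rightarrow> ('a \<times> 'a) set set \<Rightarrow> 'a set \<Rightarrow> 'a set set \<Rightarrow> bool" where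
  "isF X \<E> D F \<longleftrightarrow> F \<subseteq> Pow X \<and> D \<in> F \<and> (\<forall>a\<in>F. \<forall>b\<in>F. a \<inter> b \<in> F)
     \<and> (\<forall>a b. a \<in> F \<and> a \<subseteq> b \<and> b \<subseteq> X \<longrightarrow> b \<in> F) \<and> (\<forall>a\<in>F. \<not> bounded_in X \<E> a)"

lemma isFI:
  assumes "F \<subseteq> Pow X" "D \<in> F" "\<And>a b. a \<in> F \<Longrightarrow> b \<in> F \<Longrightarrow> a \<inter> b \<in> F"
    "\<And>a b. a \<in> F \<Longrightarrow> a \<subseteq> b \<Longrightarrow> b \<subseteq> X \<Longrightarrow> b \<in> F" "\<And>a. a \<in> F \<Longrightarrow> \<not> bounded_in X \<E> a"
  shows "isF X \<E> D F"
  unfolding isF_def using assms by blast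

lemma isFD:
  assumes "isF X \<E> D F"
  shows "F \<subseteq> Pow X" "D \<in> F" "\<And>a b. a \<in> F \<Longrightarrow> b \<in> F \<Longrightarrow> a \<inter> b \<in> F"
    "\<And>a b. a \<in> F \<Longrightarrow> a \<subseteq> b \<Longrightarrow> b \<subseteq> X \<Longrightarrow> b \<in> F" "\<And>a. a \<in> F \<Longrightarrow> \<not> bounded_in X \<E> a"
proof -
  have h0: "F \<subseteq> Pow X \<and> D \<in> F \<and> (\<forall>a\<in>F. \<forall>b\<in>F. a \<inter> b \<in> F)
     \<and> (\<forall>a b. a \<in> F \<and> a \<subseteq> b \<and> b \<subseteq> X \<longrightarrow> b \<in> F) \<and> (\<forall>a\<in>F. \<not> bounded_in X \<E> a)"
    using assms unfolding isF_def .
  note h = h0[THEN conjunct1] h0[THEN conjunct2, THEN conjunct1]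
    h0[THEN conjunct2, THEN conjunct2, THEN conjunct1]
    h0[THEN conjunct2, THEN conjunct2, THEN conjunct2, THEN conjunct1]
    h0[THEN conjunct2, THEN conjunct2, THEN conjunct2, THEN conjunct2]
  show "F \<subseteq> Pow X" "D \<in> F" by (fact h(1), fact h(2))
  show "\<And>a b. a \<in> F \<Longrightarrow> b \<in> F \<Longrightarrow> a \<inter> b \<in> F" using h(3) by blast
  show "\<And>a b. a \<in> F \<Longrightarrow> a \<subseteq> b \<Longrightarrow> b \<subseteq> X \<Longrightarrow> b \<in> F" using h(4) by blast
  show "\<And>a. a \<in> F \<Longrightarrow> \<not> bounded_in X \<E> a" using h(5) by blast
qed

lemma exists_sharp:
  assumes cs: "coarse_structure X \<E>" and DX: "D \<subseteq> X" and Du: "\<not> bounded_in X \<E> D"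
    and Xne: "X \<noteq> {}"
  shows "\<exists>p\<in>sharp_ultrafilters X \<E>. D \<in> p"
proof -
  define \<A> where "\<A> = {F. isF X \<E> D F}"
  have P: "{b. D \<subseteq> b \<and> b \<subseteq> X} \<in> \<A>"
    unfolding \<A>_def mem_Collect_eq
  proof (rule isFI)
    fix a assume "a \<in> {b. D \<subseteq> b \<and> b \<subseteq> X}"
    then have "D \<subseteq> a" by simp
    then show "\<not> bounded_in X \<E> a" using Du bdd_mono by metis
  qed (use DX in auto)
  have "\<exists>M\<in>\<A>. \<forall>Y\<in>\<A>. M \<subseteq> Y \<longrightarrow> Y = M"
  proof (rule subset_Zorn_nonempty)
    show "\<A> \<noteq> {}" using P by blast
  next
    fix C assume Cne: "C \<noteq> {}" and ch: "subset.chain \<A> C"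
    have CA: "\<And>F. F \<in> C \<Longrightarrow> isF X \<E> D F" and tot: "\<And>F G. F \<in> C \<Longrightarrow> G \<in> C \<Longrightarrow> F \<subseteq> G \<or> G \<subseteq> F"
      using ch unfolding subset_chain_def \<A>_def by auto
    show "\<Union>C \<in> \<A>"
      unfolding \<A>_def mem_Collect_eq
    proof (rule isFI)
      show "\<Union>C \<subseteq> Pow X" using CA isFD(1) by blast
      obtain F where "F \<in> C" using Cne by blast
      then show "D \<in> \<Union>C" using CA isFD(2) by blast
    next
      fix a b assume a: "a \<in> \<Union>C" and b: "b \<in> \<Union>C"
      then obtain F G where F: "F \<in> C" "a \<in> F" and G: "G \<in> C" "b \<in> G" by blast
      from tot[OF F(1) G(1)] show "a \<inter> b \<in> \<Union>C"
      proof
        assume "F \<subseteq> G"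
        then have "a \<inter> b \<in> G" using isFD(3)[OF CA[OF G(1)]] F G by blast
        then show ?thesis using G by blast
      next
        assume "G \<subseteq> F"
        then have "a \<inter> b \<in> F" using isFD(3)[OF CA[OF F(1)]] F G by blast
        then show ?thesis using F by blast
      qed
    next
      fix a b assume a: "a \<in> \<Union>C" and ab: "a \<subseteq> b" "b \<subseteq> X"
      then obtain F where F: "F \<in> C" "a \<in> F" by blast
      then have "b \<in> F" using isFD(4)[OF CA[OF F(1)] F(2) ab] by blast
      then show "b \<in> \<Union>C" using F by blast
    next
      fix a assume a: "a \<in> \<Union>C"
      then obtain F where F: "F \<in> C" "a \<in> F" by blast
      then show "\<not> bounded_in X \<E> a" using isFD(5)[OF CA[OF F(1)] F(2)] by blast
    qed
  qed
  then obtain M where MA: "M \<in> \<A>" and Mmax: "\<And>Y. Y \<in> \<A> \<Longrightarrow> M \<subseteq> Y \<Longrightarrow> Y = M" by blast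
  have iM: "isF X \<E> D M" using MA unfolding \<A>_def by simp
  note Msub = isFD(1)[OF iM] and DM = isFD(2)[OF iM] and Mint = isFD(3)[OF iM]
    and Mup = isFD(4)[OF iM] and Mub = isFD(5)[OF iM]
  have XM: "X \<in> M" using Mup[OF DM DX] by simp
  have ext: "S \<in> M" if SX: "S \<subseteq> X" and nb: "\<And>F. F \<in> M \<Longrightarrow> \<not> bounded_in X \<E> (F \<inter> S)" for S
  proof -
    define M' where "M' = {B. B \<subseteq> X \<and> (\<exists>F\<in>M. F \<inter> S \<subseteq> B)}"
    have "isF X \<E> D M'"
    proof (rule isFI)
      show "M' \<subseteq> Pow X" unfolding M'_def by blast
      have "D \<inter> S \<subseteq> D" by blast
      then show "D \<in> M'" unfolding M'_def using DM DX by blast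
    next
      fix a b assume "a \<in> M'" "b \<in> M'"
      then obtain F G where FG: "F \<in> M" "F \<inter> S \<subseteq> a" "G \<in> M" "G \<inter> S \<subseteq> b" "a \<subseteq> X" "b \<subseteq> X"
        unfolding M'_def by blast
      have "F \<inter> G \<in> M" using Mint FG(1,3) .
      moreover have "(F \<inter> G) \<inter> S \<subseteq> a \<inter> b" "a \<inter> b \<subseteq> X" using FG by blast+
      ultimately show "a \<inter> b \<in> M'" unfolding M'_def by blast
    next
      fix a b assume "a \<in> M'" "a \<subseteq> b" "b \<subseteq> X"
      then show "b \<in> M'" unfolding M'_def by blast
    next
      fix a assume "a \<in> M'"
      then obtain F where F: "F \<in> M" "F \<inter> S \<subseteq> a" unfolding M'_def by blast
      show "\<not> bounded_in X \<E> a"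
      proof
        assume "bounded_in X \<E> a"
        then have "bounded_in X \<E> (F \<inter> S)" using F(2) by (rule bdd_mono)
        then show False using nb[OF F(1)] by simp
      qed
    qed
    then have "M' \<in> \<A>" unfolding \<A>_def by simp
    moreover have "M \<subseteq> M'"
    proof
      fix F assume F: "F \<in> M"
      then have "F \<subseteq> X" using Msub by blast
      moreover have "F \<inter> S \<subseteq> F" by blast
      ultimately show "F \<in> M'" unfolding M'_def using F by blast
    qed
    ultimately have "M' = M" by (rule Mmax)
    moreover have "X \<inter> S \<subseteq> S" by blast
    then have "S \<in> M'" unfolding M'_def using XM SX by blast
    ultimately show ?thesis by simp
  qed
  have uf: "ultrafilter_on X M"
    unfolding ultrafilter_on_def
  proof (intro conjI ballI allI impI)
    show "\<And>A. A \<in> M \<Longrightarrow> A \<subseteq> X" using Msub by blast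
    show "X \<in> M" by (rule XM)
    obtain x where "x \<in> X" using Xne by blast
    then have "bounded_in X \<E> {}" unfolding bounded_in_def using cs_idin[OF cs] by blast
    then show "{} \<notin> M" using Mub by blast
    show "\<And>A B. A \<in> M \<Longrightarrow> B \<in> M \<Longrightarrow> A \<inter> B \<in> M" using Mint by blast
    show "\<And>A B. A \<in> M \<Longrightarrow> A \<subseteq> B \<and> B \<subseteq> X \<Longrightarrow> B \<in> M" using Mup by blast
  next
    fix A assume AX: "A \<subseteq> X"
    show "A \<in> M \<or> X - A \<in> M"
    proof (rule ccontr)
      assume n: "\<not> ?thesis"
      have "\<exists>F\<in>M. bounded_in X \<E> (F \<inter> A)" using ext[OF AX] n by blast
      then obtain F1 where F1: "F1 \<in> M" "bounded_in X \<E> (F1 \<inter> A)" by blast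
      have "\<exists>F\<in>M. bounded_in X \<E> (F \<inter> (X - A))" using ext[of "X - A"] n by blast
      then obtain F2 where F2: "F2 \<in> M" "bounded_in X \<E> (F2 \<inter> (X - A))" by blast
      have "bounded_in X \<E> ((F1 \<inter> A) \<union> (F2 \<inter> (X - A)))" using bdd_un[OF cs F1(2) F2(2)] .
      moreover have "F1 \<subseteq> X" using F1(1) Msub by blast
      then have "F1 \<inter> F2 \<subseteq> (F1 \<inter> A) \<union> (F2 \<inter> (X - A))" by blast
      ultimately have "bounded_in X \<E> (F1 \<inter> F2)" by (rule bdd_mono)
      moreover have "F1 \<inter> F2 \<in> M" using Mint F1(1) F2(1) .
      ultimately show False using Mub by blast
    qed
  qed
  show ?thesis using uf Mub DM unfolding sharp_ultrafilters_def by blast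
qed

lemma ufD:
  assumes "ultrafilter_on X p"
  shows "\<And>A. A \<in> p \<Longrightarrow> A \<subseteq> X" "X \<in> p" "{} \<notin> p" "\<And>A B. A \<in> p \<Longrightarrow> B \<in> p \<Longrightarrow> A \<inter> B \<in> p"
    "\<And>A B. A \<in> p \<Longrightarrow> A \<subseteq> B \<Longrightarrow> B \<subseteq> X \<Longrightarrow> B \<in> p"
    "\<And>A. A \<subseteq> X \<Longrightarrow> A \<in> p \<or> X - A \<in> p"
proof -
  have h0: "(\<forall>A\<in>p. A \<subseteq> X) \<and> X \<in> p \<and> {} \<notin> p \<and>
     (\<forall>A\<in>p. \<forall>B\<in>p. A \<inter> B \<in> p) \<and>
     (\<forall>A\<in>p. \<forall>B. A \<subseteq> B \<and> B \<subseteq> X \<longrightarrow> B \<in> p) \<and>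
     (\<forall>A. A \<subseteq> X \<longrightarrow> A \<in> p \<or> X - A \<in> p)" using assms unfolding ultrafilter_on_def .
  note h = h0[THEN conjunct1] h0[THEN conjunct2, THEN conjunct1]
    h0[THEN conjunct2, THEN conjunct2, THEN conjunct1]
    h0[THEN conjunct2, THEN conjunct2, THEN conjunct2, THEN conjunct1]
    h0[THEN conjunct2, THEN conjunct2, THEN conjunct2, THEN conjunct2, THEN conjunct1]
    h0[THEN conjunct2, THEN conjunct2, THEN conjunct2, THEN conjunct2, THEN conjunct2]
  show "\<And>A. A \<in> p \<Longrightarrow> A \<subseteq> X" using h(1) by blast
  show "X \<in> p" "{} \<notin> p" by (fact h(2), fact h(3))
  show "\<And>A B. A \<in> p \<Longrightarrow> B \<in> p \<Longrightarrow> A \<inter> B \<in> p" using h(4) by blast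
  show "\<And>A B. A \<in> p \<Longrightarrow> A \<subseteq> B \<Longrightarrow> B \<subseteq> X \<Longrightarrow> B \<in> p" using h(5) by blast
  show "\<And>A. A \<subseteq> X \<Longrightarrow> A \<in> p \<or> X - A \<in> p" using h(6) by blast
qed

lemma beta_sharp:
  assumes cs': "coarse_structure X \<E>'"
    and same: "\<forall>Y. Y \<subseteq> X \<longrightarrow> (bounded_in X \<E>' Y \<longleftrightarrow> bounded_in X \<E> Y)"
    and G: "G \<in> \<E>'" and gX: "\<And>x. x \<in> X \<Longrightarrow> g x \<in> X \<and> (g x, x) \<in> G"
    and p: "p \<in> sharp_ultrafilters X \<E>"
  shows "beta_ext X g p \<in> sharp_ultrafilters X \<E>"
proof -
  have up: "ultrafilter_on X p" and pu: "\<And>P. P \<in> p \<Longrightarrow> \<not> bounded_in X \<E> P"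
    using p unfolding sharp_ultrafilters_def by auto
  note u = ufD[OF up]
  let ?q = "beta_ext X g p"
  have qI: "A \<in> ?q" if "A \<subseteq> X" "P \<in> p" "g ` P \<subseteq> A" for A P
    using that unfolding beta_ext_def by blast
  have qE: "\<exists>P\<in>p. g ` P \<subseteq> A \<and> A \<subseteq> X" if "A \<in> ?q" for A
    using that unfolding beta_ext_def by blast
  have "ultrafilter_on X ?q"
    unfolding ultrafilter_on_def
  proof (intro conjI ballI allI impI)
    show "\<And>A. A \<in> ?q \<Longrightarrow> A \<subseteq> X" using qE by blast
    show "X \<in> ?q" by (rule qI[OF _ u(2)]) (use gX in auto)
    show "{} \<notin> ?q"
    proof
      assume "{} \<in> ?q"
      then obtain P where "P \<in> p" "g ` P \<subseteq> {}" using qE by blast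
      then have "P = {}" by blast
      then show False using u(3) \<open>P \<in> p\<close> by simp
    qed
    show "A \<inter> B \<in> ?q" if AB: "A \<in> ?q" "B \<in> ?q" for A B
    proof -
      obtain P where P: "P \<in> p" "g ` P \<subseteq> A" "A \<subseteq> X" using qE AB(1) by blast
      obtain P' where P': "P' \<in> p" "g ` P' \<subseteq> B" "B \<subseteq> X" using qE AB(2) by blast
      show ?thesis by (rule qI[OF _ u(4)[OF P(1) P'(1)]]) (use P P' in auto)
    qed
    show "B \<in> ?q" if AB: "A \<in> ?q" "A \<subseteq> B \<and> B \<subseteq> X" for A B
    proof -
      obtain P where P: "P \<in> p" "g ` P \<subseteq> A" using qE AB(1) by blast
      show ?thesis by (rule qI[OF _ P(1)]) (use P AB in auto)
    qed
    show "A \<in> ?q \<or> X - A \<in> ?q" if AX: "A \<subseteq> X" for A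
    proof -
      have "X \<inter> g -` A \<in> p \<or> X - (X \<inter> g -` A) \<in> p" using u(6) by blast
      then show ?thesis
      proof
        assume h: "X \<inter> g -` A \<in> p"
        show ?thesis by (rule disjI1, rule qI[OF AX h]) blast
      next
        assume h: "X - (X \<inter> g -` A) \<in> p"
        have "g ` (X - (X \<inter> g -` A)) \<subseteq> X - A" using gX by blast
        then show ?thesis using qI[OF _ h] by blast
      qed
    qed
  qed
  moreover have "\<not> bounded_in X \<E> Q" if Q: "Q \<in> ?q" for Q
  proof
    assume bQ: "bounded_in X \<E> Q"
    obtain P where P: "P \<in> p" "g ` P \<subseteq> Q" "Q \<subseteq> X" using qE Q by blast
    have "bounded_in X \<E>' Q" using same P(3) bQ by blast
    then obtain x0 E1 where E1: "x0 \<in> X" "E1 \<in> \<E>'" "Q \<subseteq> ball_at E1 x0" unfolding bounded_in_def by blast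
    have PX: "P \<subseteq> X" using u(1) P(1) .
    have "P \<subseteq> ball_at (E1 O G) x0"
    proof
      fix y assume y: "y \<in> P"
      then have "(x0, g y) \<in> E1" using P(2) E1(3) unfolding ball_at_def by blast
      moreover have "(g y, y) \<in> G" using gX y PX by blast
      ultimately have "(x0, y) \<in> E1 O G" by blast
      then show "y \<in> ball_at (E1 O G) x0" unfolding ball_at_def by simp
    qed
    then have "bounded_in X \<E>' P" unfolding bounded_in_def using E1(1) cs_comp[OF cs' E1(2) G] by blast
    then have "bounded_in X \<E> P" using same PX by blast
    then show False using pu P(1) by blast
  qed
  ultimately show ?thesis unfolding sharp_ultrafilters_def by blast
qed

lemma no_move:
  assumes cs': "coarse_structure X \<E>'"
    and same: "\<forall>Y. Y \<subseteq> X \<longrightarrow> (bounded_in X \<E>' Y \<longleftrightarrow> bounded_in X \<E> Y)"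
    and inc: "\<forall>p\<in>sharp_ultrafilters X \<E>. \<forall>q\<in>sharp_ultrafilters X \<E>. p \<noteq> q \<longrightarrow> incomparable X p q"
    and G: "G \<in> \<E>'" and gX: "\<And>x. x \<in> X \<Longrightarrow> g x \<in> X \<and> (g x, x) \<in> G"
    and p: "p \<in> sharp_ultrafilters X \<E>" and P: "P \<in> p" and dis: "g ` P \<inter> P = {}"
  shows False
proof -
  have q: "beta_ext X g p \<in> sharp_ultrafilters X \<E>" using beta_sharp[OF cs' same G gX p] by blast
  have up: "ultrafilter_on X p" using p unfolding sharp_ultrafilters_def by auto
  note u = ufD[OF up]
  have PX: "P \<subseteq> X" using u(1)[OF P] .
  have "g ` P \<in> beta_ext X g p" unfolding beta_ext_def using P PX gX by blast
  moreover have "g ` P \<notin> p"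
  proof
    assume "g ` P \<in> p"
    then have "g ` P \<inter> P \<in> p" using u(4) P by blast
    then show False using dis u(3) by simp
  qed
  ultimately have ne: "p \<noteq> beta_ext X g p" by blast
  have "incomparable X p (beta_ext X g p)" using inc p q ne by blast
  moreover have "g ` X \<subseteq> X" using gX by blast
  ultimately show False unfolding incomparable_def by blast
qed

theorem proposition2:
  fixes X :: "'a set" and \<E> :: "('a \<times> 'a) set set"
  assumes "coarse_structure X \<E>"
    and "\<not> bounded_in X \<E> X"
    and "discrete_ballean X \<E>"
    and "\<forall>p\<in>sharp_ultrafilters X \<E>. \<forall>q\<in>sharp_ultrafilters X \<E>. p \<noteq> q \<longrightarrow> incomparable X p q"
  shows "relatively_maximal X \<E>"
  unfolding relatively_maximal_def
proof (intro allI impI subsetI)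
  note cs = assms(1) and inc = assms(4)
  fix \<E>' E' assume h: "coarse_structure X \<E>' \<and> (\<forall>Y. Y \<subseteq> X \<longrightarrow> (bounded_in X \<E>' Y \<longleftrightarrow> bounded_in X \<E> Y))"
    and E': "E' \<in> \<E>'"
  have cs': "coarse_structure X \<E>'" using h by blast
  have same: "\<forall>Y. Y \<subseteq> X \<longrightarrow> (bounded_in X \<E>' Y \<longleftrightarrow> bounded_in X \<E> Y)" using h by blast
  have E'X: "E' \<subseteq> X \<times> X" using cs_sub[OF cs' E'] .
  have IdE': "Id_on X \<subseteq> E'" using cs_id[OF cs' E'] .
  show "E' \<in> \<E>"
  proof (cases "X = {}")
    case True
    then have "E' = Id_on X" using E'X by auto
    then show ?thesis using cs_idin[OF cs] by simp
  next
    case Xne: False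
    define G where "G = E' \<union> E'\<inverse>"
    have G: "G \<in> \<E>'" unfolding G_def using cs_un[OF cs' E' cs_conv[OF cs' E']] .
    have Gsym: "(b, a) \<in> G" if "(a, b) \<in> G" for a b using that unfolding G_def by blast
    have GX: "G \<subseteq> X \<times> X" using cs_sub[OF cs' G] .
    have GId: "(x, x) \<in> G" if "x \<in> X" for x using cs_id[OF cs' G] that by blast
    define D where "D = {x\<in>X. \<exists>y. (x, y) \<in> G \<and> y \<noteq> x}"
    have DX: "D \<subseteq> X" unfolding D_def by blast
    have Dbdd: "bounded_in X \<E> D"
    proof (rule ccontr)
      assume nb: "\<not> bounded_in X \<E> D"
      obtain p where p: "p \<in> sharp_ultrafilters X \<E>" and Dp: "D \<in> p"
        using exists_sharp[OF cs DX nb Xne] by blast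
      have up: "ultrafilter_on X p" using p unfolding sharp_ultrafilters_def by auto
      note u = ufD[OF up]
      define f where "f x = (if x \<in> D then SOME y. (x, y) \<in> G \<and> y \<noteq> x else x)" for x
      have fD: "(x, f x) \<in> G \<and> f x \<noteq> x" if "x \<in> D" for x
      proof -
        have "\<exists>y. (x, y) \<in> G \<and> y \<noteq> x" using that unfolding D_def by blast
        then have "(x, SOME y. (x, y) \<in> G \<and> y \<noteq> x) \<in> G \<and> (SOME y. (x, y) \<in> G \<and> y \<noteq> x) \<noteq> x"
          by (rule someI_ex)
        then show ?thesis unfolding f_def using that by simp
      qed
      have fX: "f x \<in> X \<and> (f x, x) \<in> G" if "x \<in> X" for x
      proof (cases "x \<in> D")
        case True
        then have "(x, f x) \<in> G" using fD by blast
        then show ?thesis using GX Gsym by blast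
      next
        case False
        then show ?thesis unfolding f_def using that GId by simp
      qed
      define \<M> where "\<M> = {M. M \<subseteq> D \<and> M \<inter> f ` M = {}}"
      have "\<forall>C\<in>chains \<M>. \<Union>C \<in> \<M>"
      proof
        fix C assume C: "C \<in> chains \<M>"
        have CM: "C \<subseteq> \<M>" using chainsD2[OF C] .
        have "\<Union>C \<subseteq> D" using CM unfolding \<M>_def by blast
        moreover have "\<Union>C \<inter> f ` \<Union>C = {}"
        proof (rule ccontr)
          assume "\<Union>C \<inter> f ` \<Union>C \<noteq> {}"
          then obtain x y M1 M2 where x: "x \<in> M1" "M1 \<in> C" and y: "y \<in> M2" "M2 \<in> C" and xy: "x = f y"
            by blast
          from chainsD[OF C x(2) y(2)] show False
          proof
            assume "M1 \<subseteq> M2"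
            then have "x \<in> M2 \<inter> f ` M2" using x y xy by blast
            moreover have "M2 \<inter> f ` M2 = {}" using CM y(2) unfolding \<M>_def by blast
            ultimately show False by blast
          next
            assume "M2 \<subseteq> M1"
            then have "x \<in> M1 \<inter> f ` M1" using x y xy by blast
            moreover have "M1 \<inter> f ` M1 = {}" using CM x(2) unfolding \<M>_def by blast
            ultimately show False by blast
          qed
        qed
        ultimately show "\<Union>C \<in> \<M>" unfolding \<M>_def by blast
      qed
      then obtain M where MM: "M \<in> \<M>" and Mmax: "\<And>Y. Y \<in> \<M> \<Longrightarrow> M \<subseteq> Y \<Longrightarrow> Y = M"
        using Zorn_Lemma[of \<M>] by blast
      have MD: "M \<subseteq> D" and Mdis: "M \<inter> f ` M = {}" using MM unfolding \<M>_def by auto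
      have cover: "D \<subseteq> M \<union> (D \<inter> f -` M) \<union> (D \<inter> f ` M)"
      proof
        fix x assume xD: "x \<in> D"
        show "x \<in> M \<union> (D \<inter> f -` M) \<union> (D \<inter> f ` M)"
        proof (rule ccontr)
          assume n: "\<not> ?thesis"
          then have xM: "x \<notin> M" and fxM: "f x \<notin> M" and xfM: "x \<notin> f ` M" using xD by auto
          have fxx: "f x \<noteq> x" using fD[OF xD] by blast
          have "insert x M \<inter> f ` insert x M = {}"
            using xM fxM xfM fxx Mdis by auto
          then have "insert x M \<in> \<M>" unfolding \<M>_def using MD xD by blast
          then have "insert x M = M" using Mmax by blast
          then show False using xM by blast
        qed
      qed
      have "M \<union> (D \<inter> f -` M) \<union> (D \<inter> f ` M) \<in> p"
        by (rule u(5)[OF Dp cover]) (use MD DX in blast)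
      then have "M \<union> (D \<inter> f -` M) \<in> p \<or> D \<inter> f ` M \<in> p"
        by (rule uf_union[OF up]) (use MD DX in blast)+
      then have cases3: "M \<in> p \<or> D \<inter> f -` M \<in> p \<or> D \<inter> f ` M \<in> p"
        using uf_union[OF up, of M "D \<inter> f -` M"] MD DX by blast
      show False
      proof -
        { assume "M \<in> p"
          then have ?thesis using no_move[OF cs' same inc G fX p, of M] Mdis by blast }
        moreover
        { assume N: "D \<inter> f -` M \<in> p"
          have "f ` (D \<inter> f -` M) \<inter> (D \<inter> f -` M) = {}" using Mdis by blast
          then have ?thesis using no_move[OF cs' same inc G fX p N] by blast }
        moreover
        { assume K: "D \<inter> f ` M \<in> p"
          define g where "g y = (if y \<in> D \<inter> f ` M then SOME m. m \<in> M \<and> f m = y else y)" for y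
          have gK: "g y \<in> M \<and> f (g y) = y" if "y \<in> D \<inter> f ` M" for y
          proof -
            have "\<exists>m. m \<in> M \<and> f m = y" using that by blast
            then have "(SOME m. m \<in> M \<and> f m = y) \<in> M \<and> f (SOME m. m \<in> M \<and> f m = y) = y"
              by (rule someI_ex)
            then show ?thesis unfolding g_def using that by simp
          qed
          have gX: "g y \<in> X \<and> (g y, y) \<in> G" if "y \<in> X" for y
          proof (cases "y \<in> D \<inter> f ` M")
            case True
            then have "g y \<in> M" "f (g y) = y" using gK by blast+
            then have "g y \<in> D" using MD by blast
            then have "(g y, y) \<in> G" using fD \<open>f (g y) = y\<close> by metis
            then show ?thesis using GX by blast
          next
            case False
            then have "g y = y" unfolding g_def by (simp only: if_False)
            then show ?thesis using that GId by simp
          qed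
          have "g ` (D \<inter> f ` M) \<inter> (D \<inter> f ` M) = {}" using gK Mdis by blast
          then have ?thesis using no_move[OF cs' same inc G gX p K] by blast }
        ultimately show ?thesis using cases3 by blast
      qed
    qed
    then obtain x0 E0 where E0: "x0 \<in> X" "E0 \<in> \<E>" "D \<subseteq> ball_at E0 x0" unfolding bounded_in_def by blast
    define H where "H = E0\<inverse> O E0"
    have H: "H \<in> \<E>" unfolding H_def using cs_comp[OF cs cs_conv[OF cs E0(2)] E0(2)] .
    have "E' \<subseteq> H"
    proof
      fix z assume z: "z \<in> E'"
      then obtain a b where ab: "z = (a, b)" by (cases z) auto
      show "z \<in> H"
      proof (cases "a = b")
        case True
        then have "(a, b) \<in> Id_on X" using E'X z ab by auto
        then show ?thesis using cs_id[OF cs H] ab by blast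
      next
        case False
        have "(a, b) \<in> G" "(b, a) \<in> G" using z ab unfolding G_def by auto
        then have "a \<in> D" "b \<in> D" using False E'X z ab unfolding D_def by auto
        then have "(x0, a) \<in> E0" "(x0, b) \<in> E0" using E0(3) unfolding ball_at_def by auto
        then show ?thesis unfolding H_def using ab by blast
      qed
    qed
    then show ?thesis using cs_mono[OF cs H IdE'] by blast
  qed
qed

end
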